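(* Let $M,N\in\mathbb N$ with $M>N$, let $\mathcal B\subseteq\mathcal D^N$, and let $x\in R^{p,0}_\omega$. On $\{-1,1\}^{\mathcal B}$ with the uniform probability, define $W(\theta)=\langle\sum_{K\in\mathcal B}\theta_Kh^M_K,x\rangle$. Then $\mathbb E(W)=0$ and $\mathrm{Var}(W)\le\|x\|_p^2\,|\bigcup\mathcal B|^{1/q}\,2^{-N/q}$, where $|\bigcup\mathcal B|$ is the Lebesgue measure of the union of the intervals in $\mathcal B$.
   Context: Fix $1<p<\infty$, $q=p/(p-1)$, $p^*=\max\{p,q\}$. All $L_r$ spaces are over $[0,1]$ with Lebesgue measure and $\langle g,f\rangle=\int_0^1gf$. A dyadic interval is $[(i-1)2^{-n},i2^{-n})$, $n\ge0$, $1\le i\le2^n$; $\mathcal D^n$ is the set of those of length $2^{-n}$ and $\mathcal D_n=\bigcup_{k=0}^n\mathcal D^k$. For a dyadic interval $I$, $I^+,I^-$ are its left and right halves and $h_I=\chi_{I^+}-\chi_{I^-}$. For each $n\in\mathbb N$ a family $(h^n_I)_{I\in\mathcal D_{n-1}}$ in $L_p$ is fixed with the same joint distribution as $(h_I)_{I\in\mathcal D_{n-1}}$, such that the $\sigma$-algebras $\sigma(h^n_I:I\in\mathcal D_{n-1})$, $n\in\mathbb N$, are independent. Let $\mathcal D_\omega=\{(n,I):n\in\mathbb N,I\in\mathcal D_{n-1}\}$, linearly ordered by $(m,J)\prec(n,I)$ iff $m<n$, or $m=n$ and $J$ precedes $I$ in $\mathcal D_{m-1}$ (intervals ordered first by level,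 coarser first, then from left to right). $R^{p,0}_\omega$ is the closed linear span of $\{h^n_I:(n,I)\in\mathcal D_\omega\}$ in $L_p$ (a distributional copy of the mean-zero hyperplane of the Bourgain–Rosenthal–Schechtman space $R^p_\omega$); $(h^n_I)_{(n,I)\in\mathcal D_\omega}$, in the order $\prec$, is an unconditional basis of it. *)

theory Defs
  imports "HOL-Probability.Probability"
begin

definition U01 :: "real measure" where
  "U01 = restrict_space lborel {0..1}"

text \<open>Dyadic intervals are encoded as pairs (n,i) with 1 \<le> i \<le> 2^n, standing for
  [(i-1) 2^-n, i 2^-n).\<close>
definition dint :: "nat \<times> nat \<Rightarrow> real set" where
  "dint I = {real (snd I - 1) / 2 ^ fst I ..< real (snd I) / 2 ^ fst I}"

definition Dlev :: "nat \<Rightarrow> (nat \<times> nat) set" where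
  "Dlev n = {(n, i) | i. 1 \<le> i \<and> i \<le> 2 ^ n}"

definition Dupto :: "nat \<Rightarrow> (nat \<times> nat) set" where
  "Dupto n = {(k, i) | k i. k \<le> n \<and> 1 \<le> i \<and> i \<le> 2 ^ k}"

definition dleft :: "nat \<times> nat \<Rightarrow> nat \<times> nat" where
  "dleft I = (Suc (fst I), 2 * snd I - 1)"
definition dright :: "nat \<times> nat \<Rightarrow> nat \<times> nat" where
  "dright I = (Suc (fst I), 2 * snd I)"

definition haar :: "nat \<times> nat \<Rightarrow> real \<Rightarrow> real" where
  "haar I t = indicator (dint (dleft I)) t - indicator (dint (dright I)) t"

definition Domega :: "(nat \<times> (nat \<times> nat)) set" where
  "Domega = {(n, I). 1 \<le> n \<and> I \<in> Dupto (n - 1)}"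

text \<open>Standing assumptions on the family hh n I = h^n_I: for each n \<ge> 1 the vector
  (h^n_I)_{I \<in> D_{n-1}} has the same joint distribution as (h_I)_{I \<in> D_{n-1}}, and the
  generated sigma-algebras are independent.\<close>
definition haar_copies :: "(nat \<Rightarrow> nat \<times> nat \<Rightarrow> real \<Rightarrow> real) \<Rightarrow> bool" where
  "haar_copies hh \<longleftrightarrow>
     (\<forall>n\<ge>1. \<forall>I\<in>Dupto (n - 1). hh n I \<in> borel_measurable U01) \<and>
     (\<forall>n\<ge>1. distr U01 (PiM (Dupto (n - 1)) (\<lambda>_. borel)) (\<lambda>t. \<lambda>I\<in>Dupto (n - 1). hh n I t)
             = distr U01 (PiM (Dupto (n - 1)) (\<lambda>_. borel)) (\<lambda>t. \<lambda>I\<in>Dupto (n - 1). haar I t)) \<and>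
     prob_space.indep_vars U01 (\<lambda>n. PiM (Dupto (n - 1)) (\<lambda>_. borel))
        (\<lambda>n t. \<lambda>I\<in>Dupto (n - 1). hh n I t) {n. 1 \<le> n}"

definition lpnorm :: "real \<Rightarrow> (real \<Rightarrow> real) \<Rightarrow> real" where
  "lpnorm p f = (\<integral>t. \<bar>f t\<bar> powr p \<partial>U01) powr (1 / p)"

definition in_Lp :: "real \<Rightarrow> (real \<Rightarrow> real) \<Rightarrow> bool" where
  "in_Lp p f \<longleftrightarrow> f \<in> borel_measurable U01 \<and> integrable U01 (\<lambda>t. \<bar>f t\<bar> powr p)"

definition Rp0 :: "real \<Rightarrow> (nat \<Rightarrow> nat \<times> nat \<Rightarrow> real \<Rightarrow> real) \<Rightarrow> (real \<Rightarrow> real) set" where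
  "Rp0 p hh = {x. in_Lp p x \<and>
     (\<forall>e>0. \<exists>S c. finite S \<and> S \<subseteq> Domega \<and>
        lpnorm p (\<lambda>t. x t - (\<Sum>nI\<in>S. c nI * hh (fst nI) (snd nI) t)) < e)}"

definition signs :: "'a set \<Rightarrow> ('a \<Rightarrow> real) pmf" where
  "signs B = pmf_of_set (PiE B (\<lambda>_. {-1, 1}))"

end

theory Submission imports Defs begin


lemma holder_nonneg:
  fixes f g :: "'a \<Rightarrow> real" and p q :: real
  assumes pq: "p > 1" "q > 1" "1/p + 1/q = 1"
    and fm: "f \<in> borel_measurable M" and f0: "\<And>x. f x \<ge> 0" and fi: "integrable M (\<lambda>x. f x powr p)"
    and gm: "g \<in> borel_measurable M" and g0: "\<And>x. g x \<ge> 0" and gi: "integrable M (\<lambda>x. g x powr q)"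
  shows "integrable M (\<lambda>x. f x * g x) \<and>
    (\<integral>x. f x * g x \<partial>M) \<le> (\<integral>x. f x powr p \<partial>M) powr (1/p) * (\<integral>x. g x powr q \<partial>M) powr (1/q)"
proof -
  have young: "\<And>x. f x * g x \<le> f x powr p / p + g x powr q / q"
    using Youngs_inequality[OF pq] f0 g0 by blast
  have int: "integrable M (\<lambda>x. f x * g x)"
  proof (rule Bochner_Integration.integrable_bound[of _ "\<lambda>x. f x powr p / p + g x powr q / q"])
    show "integrable M (\<lambda>x. f x powr p / p + g x powr q / q)" using fi gi by auto
    show "(\<lambda>x. f x * g x) \<in> borel_measurable M" using fm gm by auto
    show "AE x in M. norm (f x * g x) \<le> norm (f x powr p / p + g x powr q / q)"
      using young f0 g0 pq by (auto intro!: AE_I2 simp: abs_of_nonneg)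
  qed
  define A where "A = (\<integral>x. f x powr p \<partial>M)"
  define B where "B = (\<integral>x. g x powr q \<partial>M)"
  have A0: "A \<ge> 0" unfolding A_def by (simp add: integral_nonneg)
  have B0: "B \<ge> 0" unfolding B_def by (simp add: integral_nonneg)
  have I0: "(\<integral>x. f x * g x \<partial>M) \<ge> 0" using f0 g0 by (simp add: integral_nonneg)
  show ?thesis
  proof (cases "A = 0 \<or> B = 0")
    case True
    have "(\<integral>x. f x * g x \<partial>M) = 0"
    proof -
      { assume "A = 0"
        then have "AE x in M. f x powr p = 0"
          using integral_nonneg_eq_0_iff_AE[OF fi] unfolding A_def by simp
        then have "AE x in M. f x * g x = 0" by eventually_elim simp
        then have ?thesis using integral_cong_AE[of "\<lambda>x. f x * g x" M "\<lambda>x. 0"] fm gm by auto }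
      moreover
      { assume "B = 0"
        then have "AE x in M. g x powr q = 0"
          using integral_nonneg_eq_0_iff_AE[OF gi] unfolding B_def by simp
        then have "AE x in M. f x * g x = 0" by eventually_elim simp
        then have ?thesis using integral_cong_AE[of "\<lambda>x. f x * g x" M "\<lambda>x. 0"] fm gm by auto }
      ultimately show ?thesis using True by blast
    qed
    then show ?thesis using int True A_def B_def by auto
  next
    case False
    then have Ap: "A > 0" and Bp: "B > 0" using A0 B0 by auto
    define a where "a = A powr (1/p)"
    define b where "b = B powr (1/q)"
    have ap: "a > 0" "a powr p = A" using Ap pq unfolding a_def by (auto simp: powr_powr)
    have bp: "b > 0" "b powr q = B" using Bp pq unfolding b_def by (auto simp: powr_powr)
    have pt: "(f x / a) * (g x / b) \<le> f x powr p / (A * p) + g x powr q / (B * q)" for x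
    proof -
      have "(f x / a) * (g x / b) \<le> (f x / a) powr p / p + (g x / b) powr q / q"
        using Youngs_inequality[OF pq, of "f x / a" "g x / b"] f0[of x] g0[of x] ap bp by simp
      also have "\<dots> = f x powr p / (A * p) + g x powr q / (B * q)"
        using f0 g0 ap bp by (simp add: powr_divide)
      finally show ?thesis .
    qed
    have "(\<integral>x. (f x / a) * (g x / b) \<partial>M) \<le> (\<integral>x. f x powr p / (A * p) + g x powr q / (B * q) \<partial>M)"
      by (rule integral_mono) (use int fi gi pt in auto)
    also have "\<dots> = A / (A * p) + B / (B * q)"
      using fi gi by (simp add: A_def B_def)
    also have "\<dots> = 1" using Ap Bp pq by simp
    finally have "(\<integral>x. f x * g x \<partial>M) / (a * b) \<le> 1"
      by (simp add: field_simps)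
    then have "(\<integral>x. f x * g x \<partial>M) \<le> a * b" using ap bp by (simp add: divide_le_eq)
    then show ?thesis using int by (simp add: a_def b_def A_def B_def)
  qed
qed



lemma flip_mem:
  assumes "K \<in> B" "\<theta> \<in> PiE B (\<lambda>_. {-1::real, 1})"
  shows "\<theta>(K := - \<theta> K) \<in> PiE B (\<lambda>_. {-1::real, 1})"
  using assms by (auto simp: PiE_iff extensional_def)

lemma signs_sum_flip:
  assumes "K \<in> B"
  shows "(\<Sum>\<theta>\<in>PiE B (\<lambda>_. {-1::real, 1}). f \<theta>) = (\<Sum>\<theta>\<in>PiE B (\<lambda>_. {-1::real, 1}). f (\<theta>(K := - \<theta> K)))"
  by (rule sum.reindex_bij_witness[of _ "\<lambda>\<theta>. \<theta>(K := - \<theta> K)" "\<lambda>\<theta>. \<theta>(K := - \<theta> K)"])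
     (auto simp: flip_mem[OF assms])

lemma sum_theta:
  assumes "K \<in> B"
  shows "(\<Sum>\<theta>\<in>PiE B (\<lambda>_. {-1::real, 1}). \<theta> K) = 0"
proof -
  have "(\<Sum>\<theta>\<in>PiE B (\<lambda>_. {-1::real, 1}). \<theta> K) = (\<Sum>\<theta>\<in>PiE B (\<lambda>_. {-1::real, 1}). - \<theta> K)"
    using signs_sum_flip[OF assms, of "\<lambda>\<theta>. \<theta> K"] by simp
  then show ?thesis by (simp add: sum_negf)
qed

lemma sum_theta2:
  assumes "K \<in> B" "K \<noteq> L"
  shows "(\<Sum>\<theta>\<in>PiE B (\<lambda>_. {-1::real, 1}). \<theta> K * \<theta> L) = 0"
proof -
  have "(\<Sum>\<theta>\<in>PiE B (\<lambda>_. {-1::real, 1}). \<theta> K * \<theta> L) = (\<Sum>\<theta>\<in>PiE B (\<lambda>_. {-1::real, 1}). - (\<theta> K * \<theta> L))"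
    using signs_sum_flip[OF assms(1), of "\<lambda>\<theta>. \<theta> K * \<theta> L"] assms(2) by simp
  then show ?thesis by (simp add: sum_negf)
qed

lemma sum_theta_sq:
  assumes "K \<in> B"
  shows "(\<Sum>\<theta>\<in>PiE B (\<lambda>_. {-1::real, 1}). \<theta> K * \<theta> K) = real (card (PiE B (\<lambda>_. {-1::real, 1})))"
proof -
  have "(\<Sum>\<theta>\<in>PiE B (\<lambda>_. {-1::real, 1}). \<theta> K * \<theta> K) = (\<Sum>\<theta>\<in>PiE B (\<lambda>_. {-1::real, 1}). 1)"
    by (rule sum.cong) (use assms in \<open>auto simp: PiE_iff\<close>)
  then show ?thesis by simp
qed

lemma signs_moments:
  fixes a :: "'a \<Rightarrow> real"
  assumes fin: "finite B"
  shows "measure_pmf.expectation (signs B) (\<lambda>\<theta>. \<Sum>K\<in>B. \<theta> K * a K) = 0 \<and>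
         measure_pmf.variance (signs B) (\<lambda>\<theta>. \<Sum>K\<in>B. \<theta> K * a K) = (\<Sum>K\<in>B. (a K)\<^sup>2)"
proof -
  define S where "S = PiE B (\<lambda>_. {-1::real, 1})"
  have Sfin: "finite S" unfolding S_def using fin by (simp add: finite_PiE)
  have Sne: "S \<noteq> {}" unfolding S_def by (simp add: PiE_eq_empty_iff)
  have cS: "real (card S) > 0" using Sfin Sne by (simp add: card_gt_0_iff)
  have E: "measure_pmf.expectation (signs B) (\<lambda>\<theta>. \<Sum>K\<in>B. \<theta> K * a K) = 0"
  proof -
    have "measure_pmf.expectation (signs B) (\<lambda>\<theta>. \<Sum>K\<in>B. \<theta> K * a K)
        = (\<Sum>\<theta>\<in>S. \<Sum>K\<in>B. \<theta> K * a K) / card S"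
      unfolding signs_def S_def[symmetric] using Sfin Sne by (simp add: integral_pmf_of_set)
    also have "(\<Sum>\<theta>\<in>S. \<Sum>K\<in>B. \<theta> K * a K) = (\<Sum>K\<in>B. a K * (\<Sum>\<theta>\<in>S. \<theta> K))"
      by (subst sum.swap) (simp add: sum_distrib_left mult.commute)
    also have "\<dots> = 0" unfolding S_def by (simp add: sum_theta)
    finally show ?thesis by simp
  qed
  have "measure_pmf.variance (signs B) (\<lambda>\<theta>. \<Sum>K\<in>B. \<theta> K * a K)
      = measure_pmf.expectation (signs B) (\<lambda>\<theta>. (\<Sum>K\<in>B. \<theta> K * a K)\<^sup>2)"
    using E by simp
  also have "\<dots> = (\<Sum>\<theta>\<in>S. (\<Sum>K\<in>B. \<theta> K * a K)\<^sup>2) / card S"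
    unfolding signs_def S_def[symmetric] using Sfin Sne by (simp add: integral_pmf_of_set)
  also have "(\<Sum>\<theta>\<in>S. (\<Sum>K\<in>B. \<theta> K * a K)\<^sup>2) = (\<Sum>\<theta>\<in>S. \<Sum>K\<in>B. \<Sum>L\<in>B. (a K * a L) * (\<theta> K * \<theta> L))"
    by (simp add: power2_eq_square sum_product algebra_simps)
  also have "\<dots> = (\<Sum>K\<in>B. \<Sum>L\<in>B. (a K * a L) * (\<Sum>\<theta>\<in>S. \<theta> K * \<theta> L))"
    by (simp add: sum_distrib_left sum.swap[of _ S])
  also have "\<dots> = (\<Sum>K\<in>B. \<Sum>L\<in>B. if L = K then (a K)\<^sup>2 * card S else 0)"
    by (rule sum.cong[OF refl], rule sum.cong[OF refl])
       (auto simp: S_def sum_theta2 sum_theta_sq power2_eq_square)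
  also have "\<dots> = (\<Sum>K\<in>B. (a K)\<^sup>2) * card S"
    using fin by (simp add: sum_distrib_right)
  finally show ?thesis using E cS by simp
qed



lemma dleft_sub: "K \<in> Dlev N \<Longrightarrow> dint (dleft K) \<subseteq> dint K"
proof -
  assume "K \<in> Dlev N"
  then obtain i where K: "K = (N, i)" "1 \<le> i" by (auto simp: Dlev_def)
  have e: "real (2 * i - 1 - 1) = 2 * real i - 2" "real (2*i - 1) = 2 * real i - 1"
    using K(2) by auto
  have "real (i - 1) = real i - 1" using K(2) by auto
  then show ?thesis using K e
    by (auto simp: dint_def dleft_def field_simps)
qed

lemma dright_sub: "K \<in> Dlev N \<Longrightarrow> dint (dright K) \<subseteq> dint K"
proof -
  assume "K \<in> Dlev N"
  then obtain i where K: "K = (N, i)" "1 \<le> i" by (auto simp: Dlev_def)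
  have e: "real (2*i - 1) = 2 * real i - 1"
    using K(2) by auto
  have "real (i - 1) = real i - 1" using K(2) by auto
  then show ?thesis using K e
    by (auto simp: dint_def dright_def field_simps)
qed

lemma haar_abs_le: "K \<in> Dlev N \<Longrightarrow> \<bar>haar K t\<bar> \<le> indicator (dint K) t"
  using dleft_sub[of K N] dright_sub[of K N]
  by (auto simp: haar_def indicator_def)

lemma dint_disj:
  assumes "K \<in> Dlev N" "L \<in> Dlev N" "K \<noteq> L"
  shows "dint K \<inter> dint L = {}"
proof -
  obtain i where K: "K = (N, i)" "1 \<le> i" using assms by (auto simp: Dlev_def)
  obtain j where L: "L = (N, j)" "1 \<le> j" using assms by (auto simp: Dlev_def)
  have ij: "i \<noteq> j" using K L assms by auto
  have r: "real (i - 1) = real i - 1" "real (j - 1) = real j - 1" using K L by auto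
  have "i + 1 \<le> j \<or> j + 1 \<le> i" using ij by auto
  then have "real i \<le> real j - 1 \<or> real j \<le> real i - 1" by auto
  then show ?thesis using K L r
    by (auto simp: dint_def divide_le_cancel) (smt (verit) divide_right_mono zero_le_power)+
qed

lemma dint_measure: "K \<in> Dlev N \<Longrightarrow> measure lborel (dint K) = 1 / 2 ^ N"
proof -
  assume "K \<in> Dlev N"
  then obtain i where K: "K = (N, i)" "1 \<le> i" by (auto simp: Dlev_def)
  have r: "real (i - 1) = real i - 1" using K by auto
  have "real (i - 1) / 2 ^ N \<le> real i / 2 ^ N" by (simp add: divide_right_mono)
  then show ?thesis using K r by (simp add: dint_def diff_divide_distrib)
qed

lemma sum_haar_le:
  assumes "finite B" "B \<subseteq> Dlev N"
  shows "(\<Sum>K\<in>B. \<bar>haar K t\<bar>) \<le> indicator (\<Union>K\<in>B. dint K) t"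
proof -
  have "(\<Sum>K\<in>B. \<bar>haar K t\<bar>) \<le> (\<Sum>K\<in>B. indicator (dint K) t)"
    using assms haar_abs_le by (intro sum_mono) blast
  also have "\<dots> = indicator (\<Union>K\<in>B. dint K) t"
  proof (rule indicator_UN_disjoint[symmetric])
    show "finite B" by fact
    show "disjoint_family_on dint B"
      unfolding disjoint_family_on_def using assms(2) dint_disj[of _ N] by blast
  qed
  finally show ?thesis .
qed

lemma powr_le_indicator:
  fixes u q :: real
  assumes "0 \<le> u" "u \<le> indicator S t" "q > 0"
  shows "u powr q \<le> indicator S t"
proof (cases "t \<in> S")
  case True
  then have "u \<le> 1" using assms by simp
  then have "u powr q \<le> 1 powr q" using assms by (intro powr_mono2) auto
  then show ?thesis using True by simp
next
  case False
  then show ?thesis using assms by simp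
qed

lemma haar_meas[measurable]: "haar K \<in> borel_measurable U01"
  unfolding haar_def U01_def dint_def
  by (intro measurable_restrict_space1) measurable

lemma ind_U01: "S \<in> sets borel \<Longrightarrow> (indicator S :: real \<Rightarrow> real) \<in> borel_measurable U01"
  unfolding U01_def by (intro measurable_restrict_space1) simp

lemma U01_space: "space U01 = {0..1}"
  by (simp add: U01_def)

lemma U01_finite: "finite_measure U01"
proof (rule finite_measureI)
  have "emeasure U01 {0..1} = emeasure lborel {0..(1::real)}"
    unfolding U01_def by (subst emeasure_restrict_space) auto
  then show "emeasure U01 (space U01) \<noteq> \<infinity>" by (simp add: U01_space)
qed

lemma U01_measure_le:
  assumes "S \<in> sets lborel" "emeasure lborel S < \<infinity>"
  shows "measure U01 (S \<inter> space U01) \<le> measure lborel S"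
proof -
  have "measure U01 (S \<inter> space U01) = measure lborel (S \<inter> {0..1})"
    unfolding U01_def using assms by (subst measure_restrict_space) auto
  also have "\<dots> \<le> measure lborel S"
    using assms by (intro measure_mono_fmeasurable) (auto intro: fmeasurableI)
  finally show ?thesis .
qed

lemma integral_indicator_U01:
  assumes "S \<in> sets lborel" "emeasure lborel S < \<infinity>"
  shows "(\<integral>t. indicator S t \<partial>U01) \<le> measure lborel S"
  using U01_measure_le[OF assms] by simp

lemma dint_sets[measurable]: "dint K \<in> sets lborel"
  by (simp add: dint_def)

lemma dint_fin: "emeasure lborel (dint K) < \<infinity>"
proof -
  have "emeasure lborel (dint K) \<le> emeasure lborel {real (snd K - 1) / 2 ^ fst K .. real (snd K) / 2 ^ fst K}"
    by (rule emeasure_mono) (auto simp: dint_def)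
  also have "\<dots> < \<infinity>" by (simp add: emeasure_lborel_Icc_eq)
  finally show ?thesis .
qed

lemma dint_sets'[measurable]: "dint K \<in> sets borel"
  by (simp add: dint_def)

lemma dunion_fin: "finite B \<Longrightarrow> emeasure lborel (\<Union>K\<in>B. dint K) < \<infinity>"
proof -
  assume f: "finite B"
  have "emeasure lborel (\<Union>K\<in>B. dint K) \<le> (\<Sum>K\<in>B. emeasure lborel (dint K))"
    by (rule emeasure_subadditive_finite) (auto simp: f)
  also have "\<dots> < \<infinity>" using dint_fin f by (simp add: sum_Pinfty less_top)
  finally show ?thesis .
qed



lemma transfer:
  fixes G :: "(nat \<times> nat \<Rightarrow> real) \<Rightarrow> real"
  assumes hh: "haar_copies hh" and M1: "1 \<le> M"
    and G: "G \<in> borel_measurable (PiM (Dupto (M - 1)) (\<lambda>_. borel))"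
  shows "integrable U01 (\<lambda>t. G (\<lambda>I\<in>Dupto (M - 1). hh M I t)) = integrable U01 (\<lambda>t. G (\<lambda>I\<in>Dupto (M - 1). haar I t))"
    and "(\<integral>t. G (\<lambda>I\<in>Dupto (M - 1). hh M I t) \<partial>U01) = (\<integral>t. G (\<lambda>I\<in>Dupto (M - 1). haar I t) \<partial>U01)"
proof -
  have mh: "(\<lambda>t. \<lambda>I\<in>Dupto (M - 1). hh M I t) \<in> measurable U01 (PiM (Dupto (M - 1)) (\<lambda>_. borel))"
    using hh M1 unfolding haar_copies_def by (intro measurable_restrict) auto
  have mr: "(\<lambda>t. \<lambda>I\<in>Dupto (M - 1). haar I t) \<in> measurable U01 (PiM (Dupto (M - 1)) (\<lambda>_. borel))"
    by (intro measurable_restrict) auto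
  have D: "distr U01 (PiM (Dupto (M - 1)) (\<lambda>_. borel)) (\<lambda>t. \<lambda>I\<in>Dupto (M - 1). hh M I t)
         = distr U01 (PiM (Dupto (M - 1)) (\<lambda>_. borel)) (\<lambda>t. \<lambda>I\<in>Dupto (M - 1). haar I t)"
    using hh M1 unfolding haar_copies_def by auto
  show "integrable U01 (\<lambda>t. G (\<lambda>I\<in>Dupto (M - 1). hh M I t)) = integrable U01 (\<lambda>t. G (\<lambda>I\<in>Dupto (M - 1). haar I t))"
    using integrable_distr_eq[OF mh G] integrable_distr_eq[OF mr G] D by simp
  show "(\<integral>t. G (\<lambda>I\<in>Dupto (M - 1). hh M I t) \<partial>U01) = (\<integral>t. G (\<lambda>I\<in>Dupto (M - 1). haar I t) \<partial>U01)"
    using integral_distr[OF mh G] integral_distr[OF mr G] D by simp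
qed

lemma Dlev_finite: "finite (Dlev N)"
proof -
  have "Dlev N = (\<lambda>i. (N, i)) ` {1..2^N}" by (auto simp: Dlev_def)
  then show ?thesis by simp
qed

lemma Dlev_sub: "N < M \<Longrightarrow> Dlev N \<subseteq> Dupto (M - 1)"
  by (auto simp: Dlev_def Dupto_def)

theorem mainTheorem6:
  fixes p q :: real and hh :: "nat \<Rightarrow> nat \<times> nat \<Rightarrow> real \<Rightarrow> real"
    and M N :: nat and B :: "(nat \<times> nat) set" and x :: "real \<Rightarrow> real"
    and W :: "((nat \<times> nat) \<Rightarrow> real) \<Rightarrow> real"
  assumes p: "1 < p" and q: "q = p / (p - 1)"
    and hh: "haar_copies hh"
    and MN: "M > N"
    and B: "B \<subseteq> Dlev N"
    and x: "x \<in> Rp0 p hh"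
    and W: "W = (\<lambda>\<theta>. \<integral>t. (\<Sum>K\<in>B. \<theta> K * hh M K t) * x t \<partial>U01)"
  shows "measure_pmf.expectation (signs B) W = 0 \<and>
         measure_pmf.variance (signs B) W
           \<le> (lpnorm p x)\<^sup>2 * (measure lborel (\<Union>K\<in>B. dint K)) powr (1 / q) * 2 powr (- real N / q)"
proof -
  have M1: "1 \<le> M" using MN by simp
  define V where "V = Dupto (M - 1)"
  have BV: "B \<subseteq> V" using B Dlev_sub[OF MN] unfolding V_def by blast
  have finB: "finite B" using B Dlev_finite finite_subset by blast
  have hm[measurable]: "K \<in> B \<Longrightarrow> hh M K \<in> borel_measurable U01" for K
    using hh M1 BV unfolding haar_copies_def V_def by auto
  have xm[measurable]: "x \<in> borel_measurable U01" and xi: "integrable U01 (\<lambda>t. \<bar>x t\<bar> powr p)"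
    using x by (auto simp: Rp0_def in_Lp_def)
  have "q - 1 = 1 / (p - 1)" using p q by (simp add: field_simps)
  moreover have "1 / (p - 1) > 0" using p by simp
  ultimately have q1: "q > 1" by linarith
  have "1/q = (p - 1) / p" using p q by simp
  then have pq: "1/q + 1/p = 1" using p by (simp add: diff_divide_distrib)
  define X where "X = lpnorm p x"
  have X_def': "X = (\<integral>t. \<bar>\<bar>x t\<bar>\<bar> powr p \<partial>U01) powr (1/p)" by (simp add: X_def lpnorm_def)
  have X0: "X \<ge> 0" by (simp add: X_def lpnorm_def)
  have fm: "finite_measure U01" by (rule U01_finite)
  have H: "integrable U01 (\<lambda>t. F t * \<bar>x t\<bar>) \<and>
       (\<integral>t. F t * \<bar>x t\<bar> \<partial>U01) \<le> (\<integral>t. F t powr q \<partial>U01) powr (1/q) * X"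
    if "F \<in> borel_measurable U01" "\<And>t. F t \<ge> 0" "integrable U01 (\<lambda>t. F t powr q)" for F
    using holder_nonneg[of q p F U01 "\<lambda>t. \<bar>x t\<bar>", OF q1 p pq that(1) that(2) that(3)] xi
    unfolding X_def' by simp
  define m where "m = measure lborel (\<Union>K\<in>B. dint K)"
  have one: "integrable U01 (\<lambda>t. \<bar>hh M K t\<bar> * \<bar>x t\<bar>) \<and>
       (\<integral>t. \<bar>hh M K t\<bar> * \<bar>x t\<bar> \<partial>U01) \<le> (1 / 2 ^ N) powr (1/q) * X" if K: "K \<in> B" for K
  proof -
    define G where "G = (\<lambda>f::nat\<times>nat \<Rightarrow> real. \<bar>f K\<bar> powr q)"
    have KV: "K \<in> V" using K BV by blast
    have Gm: "G \<in> borel_measurable (PiM (Dupto (M - 1)) (\<lambda>_. borel))"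
      unfolding G_def using KV unfolding V_def by measurable
    have e1: "(\<lambda>t. G (\<lambda>I\<in>Dupto (M - 1). hh M I t)) = (\<lambda>t. \<bar>hh M K t\<bar> powr q)"
      using KV unfolding G_def V_def by auto
    have e2: "(\<lambda>t. G (\<lambda>I\<in>Dupto (M - 1). haar I t)) = (\<lambda>t. \<bar>haar K t\<bar> powr q)"
      using KV unfolding G_def V_def by auto
    have bnd: "\<bar>haar K t\<bar> powr q \<le> indicator (dint K) t" for t
      using powr_le_indicator[of "\<bar>haar K t\<bar>" "dint K" t q] haar_abs_le[of K N t] K B q1 by auto
    have ir: "integrable U01 (\<lambda>t. \<bar>haar K t\<bar> powr q)"
      by (rule finite_measure.integrable_const_bound[OF fm, where B=1])
         (use bnd in \<open>auto intro!: AE_I2 order_trans[OF _ indicator_le_1]\<close>)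
    have ih: "integrable U01 (\<lambda>t. \<bar>hh M K t\<bar> powr q)"
      using transfer(1)[OF hh M1 Gm] ir e1 e2 by simp
    have "(\<integral>t. \<bar>hh M K t\<bar> powr q \<partial>U01) = (\<integral>t. \<bar>haar K t\<bar> powr q \<partial>U01)"
      using transfer(2)[OF hh M1 Gm] e1 e2 by simp
    also have "\<dots> \<le> (\<integral>t. indicator (dint K) t \<partial>U01)"
      by (rule integral_mono[OF ir]) (use bnd fm in \<open>auto intro!: finite_measure.integrable_const_bound[OF fm, where B=1] ind_U01\<close>)
    also have "\<dots> \<le> measure lborel (dint K)"
      by (rule integral_indicator_U01[OF _ dint_fin]) auto
    also have "\<dots> = 1 / 2 ^ N" using K B dint_measure by blast
    finally have le: "(\<integral>t. \<bar>hh M K t\<bar> powr q \<partial>U01) \<le> 1 / 2 ^ N" .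
    have "(\<integral>t. \<bar>hh M K t\<bar> powr q \<partial>U01) powr (1/q) \<le> (1 / 2 ^ N) powr (1/q)"
      using le q1 by (intro powr_mono2) (auto simp: integral_nonneg)
    then have r: "(\<integral>t. \<bar>hh M K t\<bar> powr q \<partial>U01) powr (1/q) * X \<le> (1 / 2 ^ N) powr (1/q) * X"
      using X0 by (rule mult_right_mono)
    have "(\<lambda>t. \<bar>hh M K t\<bar>) \<in> borel_measurable U01" using hm[OF K] by (rule borel_measurable_abs)
    from H[of "\<lambda>t. \<bar>hh M K t\<bar>", OF this _ ih] r show ?thesis by simp
  qed
  have sum: "(\<integral>t. (\<Sum>K\<in>B. \<bar>hh M K t\<bar>) * \<bar>x t\<bar> \<partial>U01) \<le> m powr (1/q) * X"
  proof -
    define G where "G = (\<lambda>f::nat\<times>nat \<Rightarrow> real. (\<Sum>K\<in>B. \<bar>f K\<bar>) powr q)"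
    have Gm: "G \<in> borel_measurable (PiM (Dupto (M - 1)) (\<lambda>_. borel))"
      unfolding G_def using BV unfolding V_def by measurable (use BV in \<open>auto simp: V_def\<close>)
    have e1: "(\<lambda>t. G (\<lambda>I\<in>Dupto (M - 1). hh M I t)) = (\<lambda>t. (\<Sum>K\<in>B. \<bar>hh M K t\<bar>) powr q)"
      unfolding G_def using BV unfolding V_def
      by (intro ext arg_cong[where f="\<lambda>s. s powr q"] sum.cong refl) (auto simp: subset_iff)
    have e2: "(\<lambda>t. G (\<lambda>I\<in>Dupto (M - 1). haar I t)) = (\<lambda>t. (\<Sum>K\<in>B. \<bar>haar K t\<bar>) powr q)"
      unfolding G_def using BV unfolding V_def
      by (intro ext arg_cong[where f="\<lambda>s. s powr q"] sum.cong refl) (auto simp: subset_iff)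
    have bnd: "(\<Sum>K\<in>B. \<bar>haar K t\<bar>) powr q \<le> indicator (\<Union>K\<in>B. dint K) t" for t
      using powr_le_indicator[OF _ sum_haar_le[OF finB B, of t], of q] q1 by (simp add: sum_nonneg)
    have ir: "integrable U01 (\<lambda>t. (\<Sum>K\<in>B. \<bar>haar K t\<bar>) powr q)"
      by (rule finite_measure.integrable_const_bound[OF fm, where B=1])
         (use bnd in \<open>auto intro!: AE_I2 order_trans[OF _ indicator_le_1]\<close>)
    have ih: "integrable U01 (\<lambda>t. (\<Sum>K\<in>B. \<bar>hh M K t\<bar>) powr q)"
      using transfer(1)[OF hh M1 Gm] ir e1 e2 by simp
    have "(\<integral>t. (\<Sum>K\<in>B. \<bar>hh M K t\<bar>) powr q \<partial>U01) = (\<integral>t. (\<Sum>K\<in>B. \<bar>haar K t\<bar>) powr q \<partial>U01)"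
      using transfer(2)[OF hh M1 Gm] e1 e2 by simp
    also have "\<dots> \<le> (\<integral>t. indicator (\<Union>K\<in>B. dint K) t \<partial>U01)"
      by (rule integral_mono[OF ir]) (use bnd fm in \<open>auto intro!: finite_measure.integrable_const_bound[OF fm, where B=1] ind_U01\<close>)
    also have "\<dots> \<le> m"
      unfolding m_def by (rule integral_indicator_U01[OF _ dunion_fin[OF finB]])
         (rule sets.finite_UN[OF finB], simp)
    finally have le: "(\<integral>t. (\<Sum>K\<in>B. \<bar>hh M K t\<bar>) powr q \<partial>U01) \<le> m" .
    have "(\<integral>t. (\<Sum>K\<in>B. \<bar>hh M K t\<bar>) powr q \<partial>U01) powr (1/q) \<le> m powr (1/q)"
      using le q1 by (intro powr_mono2) (auto simp: integral_nonneg sum_nonneg)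
    then have r: "(\<integral>t. (\<Sum>K\<in>B. \<bar>hh M K t\<bar>) powr q \<partial>U01) powr (1/q) * X \<le> m powr (1/q) * X"
      using X0 by (rule mult_right_mono)
    have "(\<lambda>t. \<Sum>K\<in>B. \<bar>hh M K t\<bar>) \<in> borel_measurable U01"
      by (rule borel_measurable_sum) (rule borel_measurable_abs, rule hm)
    from H[of "\<lambda>t. \<Sum>K\<in>B. \<bar>hh M K t\<bar>", OF this _ ih] r show ?thesis by (simp add: sum_nonneg)
  qed
  define a where "a K = (\<integral>t. hh M K t * x t \<partial>U01)" for K
  define c where "c K = (\<integral>t. \<bar>hh M K t\<bar> * \<bar>x t\<bar> \<partial>U01)" for K
  define D where "D = (1 / 2 ^ N) powr (1/q) * X"
  have intK: "integrable U01 (\<lambda>t. hh M K t * x t)" if "K \<in> B" for K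
    using one[OF that] integrable_abs_iff[of "\<lambda>t. hh M K t * x t" U01] hm[OF that]
    by (simp add: abs_mult)
  have ac: "\<bar>a K\<bar> \<le> c K" if "K \<in> B" for K
    unfolding a_def c_def
    by (rule integral_abs_bound_integral) (use intK[OF that] one[OF that] in \<open>auto simp: abs_mult\<close>)
  have cD: "c K \<le> D" if "K \<in> B" for K using one[OF that] unfolding c_def D_def by simp
  have c0: "c K \<ge> 0" for K unfolding c_def by (simp add: integral_nonneg)
  have csum: "(\<Sum>K\<in>B. c K) \<le> m powr (1/q) * X"
  proof -
    have "(\<Sum>K\<in>B. c K) = (\<integral>t. (\<Sum>K\<in>B. \<bar>hh M K t\<bar> * \<bar>x t\<bar>) \<partial>U01)"
      unfolding c_def by (subst Bochner_Integration.integral_sum) (use one in auto)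
    also have "\<dots> = (\<integral>t. (\<Sum>K\<in>B. \<bar>hh M K t\<bar>) * \<bar>x t\<bar> \<partial>U01)"
      by (simp add: sum_distrib_right)
    finally show ?thesis using sum by simp
  qed
  have Weq: "W = (\<lambda>\<theta>. \<Sum>K\<in>B. \<theta> K * a K)"
  proof
    fix \<theta> :: "nat \<times> nat \<Rightarrow> real"
    have "W \<theta> = (\<integral>t. (\<Sum>K\<in>B. \<theta> K * (hh M K t * x t)) \<partial>U01)"
      unfolding W by (simp add: sum_distrib_right mult.assoc)
    also have "\<dots> = (\<Sum>K\<in>B. \<theta> K * a K)"
      unfolding a_def by (subst Bochner_Integration.integral_sum) (use intK in auto)
    finally show "W \<theta> = (\<Sum>K\<in>B. \<theta> K * a K)" .
  qed
  note mom = signs_moments[OF finB, of a]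
  have "(\<Sum>K\<in>B. (a K)\<^sup>2) \<le> (\<Sum>K\<in>B. c K * D)"
  proof (rule sum_mono)
    fix K assume K: "K \<in> B"
    have "(a K)\<^sup>2 = \<bar>a K\<bar> * \<bar>a K\<bar>" by (simp add: power2_eq_square)
    also have "\<dots> \<le> c K * c K" using ac[OF K] by (intro mult_mono) auto
    also have "\<dots> \<le> c K * D" using cD[OF K] c0 by (intro mult_left_mono) auto
    finally show "(a K)\<^sup>2 \<le> c K * D" .
  qed
  also have "\<dots> = D * (\<Sum>K\<in>B. c K)" by (simp add: sum_distrib_left mult.commute)
  also have "\<dots> \<le> D * (m powr (1/q) * X)"
    using csum X0 by (intro mult_left_mono) (auto simp: D_def)
  also have "\<dots> = X\<^sup>2 * m powr (1/q) * 2 powr (- real N / q)"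
  proof -
    have "(1 / 2 ^ N) powr (1/q) = 2 powr (- real N / q)"
    proof -
      have "(1::real) / 2 ^ N = 2 powr (- real N)" by (simp add: powr_minus powr_realpow divide_inverse)
      then show ?thesis by (simp add: powr_powr)
    qed
    then show ?thesis unfolding D_def by (simp add: power2_eq_square)
  qed
  finally have fin: "(\<Sum>K\<in>B. (a K)\<^sup>2) \<le> X\<^sup>2 * m powr (1/q) * 2 powr (- real N / q)" .
  have e: "measure_pmf.expectation (signs B) (\<lambda>\<theta>. \<Sum>K\<in>B. \<theta> K * a K) = 0"
    using mom by blast
  have v: "measure_pmf.variance (signs B) (\<lambda>\<theta>. \<Sum>K\<in>B. \<theta> K * a K) = (\<Sum>K\<in>B. (a K)\<^sup>2)"
    using mom by blast
  show ?thesis unfolding Weq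
  proof (rule conjI)
    show "measure_pmf.expectation (signs B) (\<lambda>\<theta>. \<Sum>K\<in>B. \<theta> K * a K) = 0" by (rule e)
    show "measure_pmf.variance (signs B) (\<lambda>\<theta>. \<Sum>K\<in>B. \<theta> K * a K)
      \<le> (lpnorm p x)\<^sup>2 * (measure lborel (\<Union>K\<in>B. dint K)) powr (1 / q) * 2 powr (- real N / q)"
      using v fin unfolding X_def m_def by linarith
  qed
qed

end
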